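(* Let $\mathbb{S}\in\mathbb{Z}^{N_X\times N_e}$, $\mathcal{X}=\mathbb{R}^{N_X}_{>0}$, let $\Phi$ be a primal thermodynamic function on $\mathcal{X}$, $\tilde{x}\in\mathcal{X}$, $f_{NE}\in\mathbb{R}^{N_e}$ a constant vector, and $\{\Psi^*_x\}_{x\in\mathcal{X}}$ a family of dissipation functions on $\mathbb{R}^{N_e}$. Consider the flow $$\dot{x}=-\mathbb{S}\,\nabla\Psi^*_x\big(f(x)\big),\qquad f(x):=\mathbb{S}^T\nabla_x\mathcal{D}_\Phi[x\|\tilde{x}]+f_{NE}=\mathbb{S}^T\big(\nabla\Phi(x)-\nabla\Phi(\tilde{x})\big)+f_{NE},$$ with flux $j(x):=\nabla\Psi^*_x(f(x))$, and let $\mathcal{M}^{\mathrm{DB}}:=\{x\in\mathcal{X}: j(x)=0\}$. If $\mathcal{M}^{\mathrm{DB}}\neq\emptyset$, then $f_{NE}\in\mathrm{Im}\,\mathbb{S}^T$ (i.e. the flow is an equilibrium flow).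
   Context: A primal thermodynamic function is a strictly convex differentiable $\Phi:\mathcal{X}\to\mathbb{R}$ such that $\{\nabla\Phi(x):x\in\mathcal{X}\}=\mathbb{R}^{N_X}$ and, for every $x_{in}\in\mathcal{X}$ and $x_{bd}\in\mathbb{R}^{N_X}_{\ge0}\setminus\mathcal{X}$, $\lim_{\lambda\to0^+}\frac{d}{d\lambda}\Phi(\lambda x_{in}+(1-\lambda)x_{bd})=-\infty$. Its Bregman divergence is $\mathcal{D}_\Phi[x\|x']=\Phi(x)-\Phi(x')-\langle x-x',\nabla\Phi(x')\rangle$. A dissipation function on $\mathbb{R}^{N_e}$ is a strictly convex, continuously differentiable, $1$-coercive, even function $\psi$ with $\psi(0)=0$; for such a function $\nabla\psi$ is a bijection of $\mathbb{R}^{N_e}$ with $\nabla\psi(f)=0$ iff $f=0$. *)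

theory Defs
  imports "HOL-Analysis.Analysis"
begin

definition strict_convex_on :: "'a::real_vector set \<Rightarrow> ('a \<Rightarrow> real) \<Rightarrow> bool" where
  "strict_convex_on S g \<longleftrightarrow> convex S \<and>
     (\<forall>x\<in>S. \<forall>y\<in>S. x \<noteq> y \<longrightarrow> (\<forall>t::real. 0 < t \<and> t < 1 \<longrightarrow>
        g ((1 - t) *\<^sub>R x + t *\<^sub>R y) < (1 - t) * g x + t * g y))"

definition grad :: "('a::real_inner \<Rightarrow> real) \<Rightarrow> 'a \<Rightarrow> 'a" where
  "grad g x = (THE v. (g has_derivative (\<lambda>h. v \<bullet> h)) (at x))"

definition pos_orthant :: "(real ^ 'n) set" where
  "pos_orthant = {x. \<forall>i. 0 < x $ i}"

definition nonneg_orthant :: "(real ^ 'n) set" where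
  "nonneg_orthant = {x. \<forall>i. 0 \<le> x $ i}"

definition primal_thermo :: "(real ^ 'n) set \<Rightarrow> (real ^ 'n \<Rightarrow> real) \<Rightarrow> bool" where
  "primal_thermo X \<Phi> \<longleftrightarrow>
     strict_convex_on X \<Phi> \<and>
     (\<forall>x\<in>X. \<Phi> differentiable (at x)) \<and>
     grad \<Phi> ` X = UNIV \<and>
     (\<forall>xin\<in>X. \<forall>xbd\<in>nonneg_orthant - X.
        filterlim (\<lambda>l. deriv (\<lambda>t. \<Phi> (t *\<^sub>R xin + (1 - t) *\<^sub>R xbd)) l) at_bot (at_right 0))"

definition bregman :: "(real ^ 'n \<Rightarrow> real) \<Rightarrow> real ^ 'n \<Rightarrow> real ^ 'n \<Rightarrow> real" where
  "bregman \<Phi> x x' = \<Phi> x - \<Phi> x' - (x - x') \<bullet> grad \<Phi> x'"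

definition dissipation :: "(real ^ 'e \<Rightarrow> real) \<Rightarrow> bool" where
  "dissipation \<psi> \<longleftrightarrow>
     strict_convex_on UNIV \<psi> \<and>
     (\<forall>f. \<psi> differentiable (at f)) \<and>
     continuous_on UNIV (grad \<psi>) \<and>
     filterlim (\<lambda>f. \<psi> f / norm f) at_top at_infinity \<and>
     (\<forall>f. \<psi> (- f) = \<psi> f) \<and>
     \<psi> 0 = 0"

end

theory Submission
  imports Defs
begin

lemma riesz_lin:
  fixes D :: "'a::euclidean_space \<Rightarrow> real"
  assumes "linear D"
  shows "D = (\<lambda>h. (\<Sum>b\<in>Basis. D b *\<^sub>R b) \<bullet> h)"
proof
  fix x :: 'a
  have "D x = D (\<Sum>b\<in>Basis. (x \<bullet> b) *\<^sub>R b)" by (simp add: euclidean_representation)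
  also have "\<dots> = (\<Sum>b\<in>Basis. (x \<bullet> b) * D b)"
    using assms by (simp add: linear_sum linear_scale)
  also have "\<dots> = (\<Sum>b\<in>Basis. D b *\<^sub>R b) \<bullet> x"
    by (simp add: inner_sum_right inner_commute mult.commute)
  finally show "D x = (\<Sum>b\<in>Basis. D b *\<^sub>R b) \<bullet> x" .
qed

lemma grad_works:
  fixes g :: "'a::euclidean_space \<Rightarrow> real"
  assumes "g differentiable (at x)"
  shows "(g has_derivative (\<lambda>h. grad g x \<bullet> h)) (at x)"
proof -
  obtain D where D: "(g has_derivative D) (at x)" using assms differentiable_def by blast
  then have "linear D" using has_derivative_linear by blast
  then have eq: "D = (\<lambda>h. (\<Sum>b\<in>Basis. D b *\<^sub>R b) \<bullet> h)" by (rule riesz_lin)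
  define v where "v = (\<Sum>b\<in>Basis. D b *\<^sub>R b)"
  have ex: "(g has_derivative (\<lambda>h. v \<bullet> h)) (at x)" using D eq v_def by simp
  have uniq: "w = v" if "(g has_derivative (\<lambda>h. w \<bullet> h)) (at x)" for w
  proof -
    have "(\<lambda>h. w \<bullet> h) = (\<lambda>h. v \<bullet> h)" using has_derivative_unique[OF that ex] .
    then have "w \<bullet> (w - v) = v \<bullet> (w - v)" by metis
    then have "(w - v) \<bullet> (w - v) = 0" by (simp add: inner_diff_left)
    then show ?thesis by simp
  qed
  have "grad g x = v" unfolding grad_def using ex uniq by (rule the_equality)
  then show ?thesis using ex by simp
qed

lemma diss_zero:
  fixes \<psi> :: "real ^ 'e \<Rightarrow> real"
  assumes d: "dissipation \<psi>" and z: "grad \<psi> v = 0"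
  shows "v = 0"
proof (rule ccontr)
  assume nz: "v \<noteq> 0"
  have sc: "strict_convex_on UNIV \<psi>" and dif: "\<psi> differentiable (at v)"
    and ev: "\<psi> (- v) = \<psi> v" and z0: "\<psi> 0 = 0"
    using d unfolding dissipation_def by auto
  have der: "(\<psi> has_derivative (\<lambda>h. 0)) (at v)"
    using grad_works[OF dif] z by simp
  define g where "g t = \<psi> (v + t *\<^sub>R (0 - v))" for t :: real
  have cvx: "convex_on UNIV \<psi>"
    unfolding convex_on_def
  proof (intro conjI convex_UNIV ballI allI impI)
    fix x y :: "real ^ 'e" and u w :: real
    assume h: "0 \<le> u" "0 \<le> w" "u + w = 1"
    show "\<psi> (u *\<^sub>R x + w *\<^sub>R y) \<le> u * \<psi> x + w * \<psi> y"
    proof (cases "x = y \<or> w = 0 \<or> w = 1")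
      case True
      then show ?thesis using h
        by (auto simp flip: scaleR_add_left distrib_right)
    next
      case False
      then have "0 < w" "w < 1" "x \<noteq> y" using h by auto
      then have "\<psi> ((1 - w) *\<^sub>R x + w *\<^sub>R y) < (1 - w) * \<psi> x + w * \<psi> y"
        using sc unfolding strict_convex_on_def by blast
      moreover have "u = 1 - w" using h by simp
      ultimately show ?thesis by simp
    qed
  qed
  have gc: "convex_on UNIV g"
    unfolding convex_on_def
  proof (intro conjI convex_UNIV ballI allI impI)
    fix a b u w :: real
    assume h: "0 \<le> u" "0 \<le> w" "u + w = 1"
    have "g (u *\<^sub>R a + w *\<^sub>R b) = \<psi> (u *\<^sub>R (v + a *\<^sub>R (0 - v)) + w *\<^sub>R (v + b *\<^sub>R (0 - v)))"
    proof -
      have "v + (u *\<^sub>R a + w *\<^sub>R b) *\<^sub>R (0 - v) = u *\<^sub>R (v + a *\<^sub>R (0 - v)) + w *\<^sub>R (v + b *\<^sub>R (0 - v))"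
        using h by (simp add: algebra_simps flip: scaleR_add_left)
      then show ?thesis unfolding g_def by simp
    qed
    also have "\<dots> \<le> u * g a + w * g b"
      unfolding g_def using cvx h unfolding convex_on_def by blast
    finally show "g (u *\<^sub>R a + w *\<^sub>R b) \<le> u * g a + w * g b" .
  qed
  have lin: "((\<lambda>t::real. v + t *\<^sub>R (0 - v)) has_derivative (\<lambda>t. t *\<^sub>R (0 - v))) (at 0)"
    by (auto intro!: derivative_eq_intros)
  have "(g has_derivative (\<lambda>t. 0)) (at 0)"
  proof -
    have "((\<lambda>t. \<psi> (v + t *\<^sub>R (0 - v))) has_derivative (\<lambda>h. 0) \<circ> (\<lambda>t. t *\<^sub>R (0 - v))) (at 0)"
      using has_derivative_compose[OF lin] der by simp
    then show ?thesis unfolding g_def by (simp add: o_def)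
  qed
  then have gd: "(g has_field_derivative 0) (at 0 within UNIV)"
    by (simp add: has_field_derivative_def mult_zero_left[abs_def])
  have "g 1 - g 0 \<ge> 0 * (1 - 0)"
    by (rule convex_on_imp_above_tangent[OF gc _ _ _ gd]) auto
  then have le: "\<psi> v \<le> \<psi> 0" unfolding g_def by simp
  have "\<psi> ((1 - 1/2) *\<^sub>R v + (1/2) *\<^sub>R (- v)) < (1 - 1/2) * \<psi> v + (1/2) * \<psi> (- v)"
  proof -
    have ne: "v \<noteq> - v"
    proof
      assume "v = - v"
      then have "v + v = 0" by (metis add.right_inverse)
      then have "(2::real) *\<^sub>R v = 0" by (simp add: scaleR_2)
      then show False using nz by simp
    qed
    have "\<forall>x\<in>UNIV. \<forall>y\<in>UNIV. x \<noteq> y \<longrightarrow> (\<forall>t::real. 0 < t \<and> t < 1 \<longrightarrow>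
        \<psi> ((1 - t) *\<^sub>R x + t *\<^sub>R y) < (1 - t) * \<psi> x + t * \<psi> y)"
      using sc unfolding strict_convex_on_def by (rule conjunct2)
    then have "\<forall>t::real. 0 < t \<and> t < 1 \<longrightarrow>
        \<psi> ((1 - t) *\<^sub>R v + t *\<^sub>R (-v)) < (1 - t) * \<psi> v + t * \<psi> (-v)"
      using ne by blast
    then have "\<psi> ((1 - 1/2) *\<^sub>R v + (1/2) *\<^sub>R (-v)) < (1 - 1/2) * \<psi> v + (1/2) * \<psi> (-v)"
      by (metis (no_types) field_sum_of_halves half_gt_zero_iff zero_less_one less_add_same_cancel1)
    then show ?thesis .
  qed
  then have "\<psi> 0 < \<psi> v" using ev by (simp add: algebra_simps)
  then show False using le by simp
qed

theorem mainTheorem3: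
  fixes S :: "real ^ 'e ^ 'n"
    and \<Phi> :: "real ^ 'n \<Rightarrow> real"
    and xt :: "real ^ 'n"
    and fNE :: "real ^ 'e"
    and Psi :: "real ^ 'n \<Rightarrow> real ^ 'e \<Rightarrow> real"
  assumes S_int: "\<forall>i k. S $ i $ k \<in> \<int>"
    and Phi: "primal_thermo pos_orthant \<Phi>"
    and xt: "xt \<in> pos_orthant"
    and Psi: "\<forall>x\<in>pos_orthant. dissipation (Psi x)"
    and MDB: "{x \<in> pos_orthant.
                grad (Psi x) (transpose S *v (grad \<Phi> x - grad \<Phi> xt) + fNE) = 0} \<noteq> {}"
  shows "fNE \<in> range (\<lambda>y. transpose S *v y)"
proof -
  obtain x where x: "x \<in> pos_orthant"
    and g: "grad (Psi x) (transpose S *v (grad \<Phi> x - grad \<Phi> xt) + fNE) = 0"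
    using MDB by blast
  have "transpose S *v (grad \<Phi> x - grad \<Phi> xt) + fNE = 0"
    using diss_zero[OF _ g] Psi x by blast
  then have "fNE = - (transpose S *v (grad \<Phi> x - grad \<Phi> xt))"
    by (simp add: add_eq_0_iff add.commute)
  also have "\<dots> = transpose S *v (grad \<Phi> xt - grad \<Phi> x)"
    by (simp add: matrix_vector_mult_diff_distrib)
  finally have "fNE = transpose S *v (grad \<Phi> xt - grad \<Phi> x)" .
  then show ?thesis by blast
qed

end
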